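(* Let $A$ be a finite nonempty set. (a) For every $M\subseteq A^A$: $(\overline{M})^{*}=\mathrm{Pol}\,\mathrm{gQuord}\,M$. (b) For a monoid $M\le A^A$ the following are equivalent: (i) $M$ is u-closed; (i)$'$ $M^{*}$ is a clone; (i)$''$ $\Gamma_M\in\mathrm{gQuord}(A)$; (ii) $M=\mathrm{End}\,Q$ for some $Q\subseteq\mathrm{gQuord}(A)$; (iii) $M^{*}=\mathrm{Pol}\,Q$ for some $Q\subseteq\mathrm{gQuord}(A)$; moreover the same $Q$ can be taken in (ii) and (iii). (c) For $Q\subseteq\mathrm{Rel}(A)$ the following are equivalent: (i) $\mathrm{End}\,Q$ is u-closed; (i)$'$ $(\mathrm{End}\,Q)^{*}$ is a clone; (i)$''$ $\Gamma_{\mathrm{End}\,Q}\in\mathrm{gQuord}(A)$; (ii) there is $Q'\subseteq\mathrm{gQuord}(A)$ with $\mathrm{End}\,Q=\mathrm{End}\,Q'$; (ii)$'$ there is $Q'\subseteq\mathrm{gQuord}(A)$ with $[Q]_{\exists,\wedge,\vee,=}=[Q']_{\exists,\wedge,\vee,=}$; (iii) there is $Q'\subseteq\mathrm{gQuord}(A)$ with $(\mathrm{End}\,Q)^{*}=\mathrm{Pol}\,Q'$; moreover the same $Q'$ can be taken in (ii) and (iii), and instead of "there is $Q'\subseteq\mathrm{gQuord}(A)$" one may take "there is $\rho\in\mathrm{gQuord}(A)$" with $Q'=\{\rho\}$.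
   Context: $\mathrm{Rel}(A)$ is the set of all finitary relations on $A$. An operation preserves a relation if componentwise application to tuples of the relation gives a tuple of the relation; $\mathrm{Pol}\,Q$ (resp. $\mathrm{End}\,Q$) is the set of all finitary operations (resp. unary maps) preserving all relations of $Q$. A relation $\rho\subseteq A^m$ is a generalized quasiorder if it is reflexive and for every $m\times m$-matrix over $A$ whose rows and columns all belong to $\rho$, the diagonal belongs to $\rho$; $\mathrm{gQuord}(A)$ is the set of all of them, and for $M\subseteq A^A$, $\mathrm{gQuord}\,M$ is the set of those preserved by all maps in $M$. Writing $A=\{a_1,\dots,a_k\}$, $\Gamma_M:=\{(g a_1,\dots,g a_k)\mid g\in M\}$. A translation of an $n$-ary $f$ is a unary map $x\mapsto f(b_1,\dots,b_{i-1},x,b_{i+1},\dots,b_n)$ with fixed $b_j$; $\mathrm{trl}(f)$ is the set of translations ($\{f\}$ for unary $f$); $N^*:=\{f\mid\mathrm{trl}(f)\subseteq N\}$. The u-closure $\overline M$ is the intersection of all monoids $N$ with $M\subseteq N\le A^A$ such that $N^*$ is a clone; $M$ is u-closed if $\overline M=M$. $[Q]_{\exists,\wedge,\vee,=}$ denotes the set of all relations definable from relations in $Q$ by positive formulas (formulas built from relation symbols of $Q$ and equality using only $\exists,\wedge,\vee$). *)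

theory Defs
  imports Main "HOL-Library.FuncSet"
begin

definition tuples :: "'a set \<Rightarrow> nat \<Rightarrow> 'a list set" where
  "tuples A m = {xs. set xs \<subseteq> A \<and> length xs = m}"

definition Ops :: "'a set \<Rightarrow> (nat \<times> ('a list \<Rightarrow> 'a)) set" where
  "Ops A = {(n, f). 1 \<le> n \<and> (\<forall>xs\<in>tuples A n. f xs \<in> A)
                         \<and> (\<forall>xs. xs \<notin> tuples A n \<longrightarrow> f xs = undefined)}"

definition Rel :: "'a set \<Rightarrow> (nat \<times> 'a list set) set" where
  "Rel A = {(m, \<rho>). 1 \<le> m \<and> \<rho> \<subseteq> tuples A m}"

definition preserves :: "nat \<times> ('a list \<Rightarrow> 'a) \<Rightarrow> nat \<times> 'a list set \<Rightarrow> bool" where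
  "preserves F R = (case F of (n, f) \<Rightarrow> case R of (m, \<rho>) \<Rightarrow>
     (\<forall>rs. length rs = n \<and> set rs \<subseteq> \<rho> \<longrightarrow>
        map (\<lambda>i. f (map (\<lambda>r. r ! i) rs)) [0..<m] \<in> \<rho>))"

definition preserves_map :: "('a \<Rightarrow> 'a) \<Rightarrow> nat \<times> 'a list set \<Rightarrow> bool" where
  "preserves_map g R = (\<forall>r\<in>snd R. map g r \<in> snd R)"

definition Pol :: "'a set \<Rightarrow> (nat \<times> 'a list set) set \<Rightarrow> (nat \<times> ('a list \<Rightarrow> 'a)) set" where
  "Pol A Q = {F \<in> Ops A. \<forall>R\<in>Q. preserves F R}"

definition End :: "'a set \<Rightarrow> (nat \<times> 'a list set) set \<Rightarrow> ('a \<Rightarrow> 'a) set" where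
  "End A Q = {g \<in> A \<rightarrow>\<^sub>E A. \<forall>R\<in>Q. preserves_map g R}"

definition is_gquord :: "'a set \<Rightarrow> nat \<times> 'a list set \<Rightarrow> bool" where
  "is_gquord A R = (case R of (m, \<rho>) \<Rightarrow>
     R \<in> Rel A
     \<and> (\<forall>a\<in>A. replicate m a \<in> \<rho>)
     \<and> (\<forall>X :: nat \<Rightarrow> nat \<Rightarrow> 'a.
          (\<forall>i<m. map (\<lambda>j. X i j) [0..<m] \<in> \<rho>)
          \<and> (\<forall>j<m. map (\<lambda>i. X i j) [0..<m] \<in> \<rho>)
          \<longrightarrow> map (\<lambda>i. X i i) [0..<m] \<in> \<rho>))"

definition gQuord :: "'a set \<Rightarrow> (nat \<times> 'a list set) set" where
  "gQuord A = {R. is_gquord A R}"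

definition gQuordM :: "'a set \<Rightarrow> ('a \<Rightarrow> 'a) set \<Rightarrow> (nat \<times> 'a list set) set" where
  "gQuordM A M = {R \<in> gQuord A. \<forall>g\<in>M. preserves_map g R}"

text \<open>Gamma_M for a fixed enumeration as = [a_1,...,a_k] of A.\<close>
definition Gamma :: "'a list \<Rightarrow> ('a \<Rightarrow> 'a) set \<Rightarrow> nat \<times> 'a list set" where
  "Gamma as M = (length as, {map g as | g. g \<in> M})"

definition trl :: "'a set \<Rightarrow> nat \<times> ('a list \<Rightarrow> 'a) \<Rightarrow> ('a \<Rightarrow> 'a) set" where
  "trl A F = (case F of (n, f) \<Rightarrow>
     {restrict (\<lambda>x. f (bs[i := x])) A | i bs. i < n \<and> bs \<in> tuples A n})"

definition star :: "'a set \<Rightarrow> ('a \<Rightarrow> 'a) set \<Rightarrow> (nat \<times> ('a list \<Rightarrow> 'a)) set" where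
  "star A N = {F \<in> Ops A. trl A F \<subseteq> N}"

definition monoid_on :: "'a set \<Rightarrow> ('a \<Rightarrow> 'a) set \<Rightarrow> bool" where
  "monoid_on A N = (N \<subseteq> A \<rightarrow>\<^sub>E A \<and> restrict id A \<in> N
     \<and> (\<forall>g\<in>N. \<forall>h\<in>N. compose A g h \<in> N))"

definition proj :: "'a set \<Rightarrow> nat \<Rightarrow> nat \<Rightarrow> nat \<times> ('a list \<Rightarrow> 'a)" where
  "proj A n i = (n, \<lambda>xs. if xs \<in> tuples A n then xs ! i else undefined)"

definition superpos :: "'a set \<Rightarrow> nat \<Rightarrow> ('a list \<Rightarrow> 'a) \<Rightarrow> ('a list \<Rightarrow> 'a) list
                        \<Rightarrow> nat \<times> ('a list \<Rightarrow> 'a)" where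
  "superpos A m f gs = (m, \<lambda>xs. if xs \<in> tuples A m then f (map (\<lambda>g. g xs) gs) else undefined)"

definition clone :: "'a set \<Rightarrow> (nat \<times> ('a list \<Rightarrow> 'a)) set \<Rightarrow> bool" where
  "clone A C = (C \<subseteq> Ops A
     \<and> (\<forall>n i. 1 \<le> n \<and> i < n \<longrightarrow> proj A n i \<in> C)
     \<and> (\<forall>n f m gs. (n, f) \<in> C \<and> 1 \<le> m \<and> length gs = n \<and> (\<forall>g\<in>set gs. (m, g) \<in> C)
          \<longrightarrow> superpos A m f gs \<in> C))"

definition ubar :: "'a set \<Rightarrow> ('a \<Rightarrow> 'a) set \<Rightarrow> ('a \<Rightarrow> 'a) set" where
  "ubar A M = \<Inter> {N. M \<subseteq> N \<and> monoid_on A N \<and> clone A (star A N)}"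

definition u_closed :: "'a set \<Rightarrow> ('a \<Rightarrow> 'a) set \<Rightarrow> bool" where
  "u_closed A M = (ubar A M = M)"

text \<open>Positive formulas (\<exists>, \<and>, \<or>, =) over relation symbols; PFalse is the empty disjunction.\<close>
datatype 'r pform =
    PAtom 'r "nat list"
  | PEq nat nat
  | PFalse
  | PAnd "'r pform" "'r pform"
  | POr "'r pform" "'r pform"
  | PEx nat "'r pform"

fun pform_over :: "(nat \<times> 'a list set) set \<Rightarrow> (nat \<times> 'a list set) pform \<Rightarrow> bool" where
  "pform_over Q (PAtom R xs) = (R \<in> Q \<and> length xs = fst R)"
| "pform_over Q (PEq i j) = True"
| "pform_over Q PFalse = True"
| "pform_over Q (PAnd \<phi> \<psi>) = (pform_over Q \<phi> \<and> pform_over Q \<psi>)"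
| "pform_over Q (POr \<phi> \<psi>) = (pform_over Q \<phi> \<and> pform_over Q \<psi>)"
| "pform_over Q (PEx i \<phi>) = pform_over Q \<phi>"

fun holds :: "'a set \<Rightarrow> (nat \<times> 'a list set) pform \<Rightarrow> (nat \<Rightarrow> 'a) \<Rightarrow> bool" where
  "holds A (PAtom R xs) v = (map v xs \<in> snd R)"
| "holds A (PEq i j) v = (v i = v j)"
| "holds A PFalse v = False"
| "holds A (PAnd \<phi> \<psi>) v = (holds A \<phi> v \<and> holds A \<psi> v)"
| "holds A (POr \<phi> \<psi>) v = (holds A \<phi> v \<or> holds A \<psi> v)"
| "holds A (PEx i \<phi>) v = (\<exists>a\<in>A. holds A \<phi> (v(i := a)))"

text \<open>[Q]_{\<exists>,\<and>,\<or>,=}: relations (arity \<ge> 1) defined on A by positive formulas over Q,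
  with the listed variables ys as the free (distinguished) variables.\<close>
definition pos_def :: "'a set \<Rightarrow> (nat \<times> 'a list set) set \<Rightarrow> (nat \<times> 'a list set) set" where
  "pos_def A Q = {(length ys, {map v ys | v. (\<forall>i. v i \<in> A) \<and> holds A \<phi> v}) | \<phi> ys.
                    ys \<noteq> [] \<and> pform_over Q \<phi>}"

end

theory Submission
  imports Defs
begin

lemma tuples_iff: "xs \<in> tuples A m \<longleftrightarrow> set xs \<subseteq> A \<and> length xs = m"
  by (simp add: tuples_def)

lemma Rel_mem: "(m,\<rho>) \<in> Rel A \<Longrightarrow> r \<in> \<rho> \<Longrightarrow> set r \<subseteq> A \<and> length r = m"
  by (auto simp: Rel_def tuples_def)

lemma gq_rel: "is_gquord A (m,\<rho>) \<Longrightarrow> (m,\<rho>) \<in> Rel A"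
  by (simp add: is_gquord_def)

lemma gq_refl: "is_gquord A (m,\<rho>) \<Longrightarrow> a \<in> A \<Longrightarrow> replicate m a \<in> \<rho>"
  by (simp add: is_gquord_def)

lemma gq_diag: "is_gquord A (m,\<rho>) \<Longrightarrow> (\<And>i. i < m \<Longrightarrow> map (\<lambda>j. X i j) [0..<m] \<in> \<rho>)
   \<Longrightarrow> (\<And>j. j < m \<Longrightarrow> map (\<lambda>i. X i j) [0..<m] \<in> \<rho>) \<Longrightarrow> map (\<lambda>i. X i i) [0..<m] \<in> \<rho>"
  unfolding is_gquord_def by blast

lemma Ops_mem: "(n,f) \<in> Ops A \<Longrightarrow> xs \<in> tuples A n \<Longrightarrow> f xs \<in> A"
  by (simp add: Ops_def)

lemma trl_pres_refl:
  assumes F: "(n,f) \<in> Ops A" and gq: "is_gquord A (m,\<rho>)" and pr: "preserves (n,f) (m,\<rho>)"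
    and g: "g \<in> trl A (n,f)"
  shows "preserves_map g (m,\<rho>)"
proof -
  obtain i bs where g: "g = restrict (\<lambda>x. f (bs[i := x])) A" and i: "i < n" and bs: "bs \<in> tuples A n"
    using g by (auto simp: trl_def)
  show ?thesis unfolding preserves_map_def
  proof
    fix r assume r: "r \<in> snd (m,\<rho>)"
    hence r': "set r \<subseteq> A" "length r = m" using Rel_mem[OF gq_rel[OF gq]] by auto
    define rs where "rs = map (\<lambda>p. if p = i then r else replicate m (bs!p)) [0..<n]"
    have "length rs = n" by (simp add: rs_def)
    moreover have "set rs \<subseteq> \<rho>"
    proof
      fix s assume "s \<in> set rs"
      then obtain p where p: "p < n" "s = (if p = i then r else replicate m (bs!p))"
        by (auto simp: rs_def)
      have "bs ! p \<in> A" using bs p by (auto simp: tuples_def)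
      thus "s \<in> \<rho>" using p r gq_refl[OF gq] by auto
    qed
    ultimately have "map (\<lambda>l. f (map (\<lambda>s. s ! l) rs)) [0..<m] \<in> \<rho>"
      using pr by (auto simp: preserves_def)
    moreover have "map (\<lambda>l. f (map (\<lambda>s. s ! l) rs)) [0..<m] = map g r"
    proof (rule nth_equalityI)
      fix l assume "l < length (map (\<lambda>l. f (map (\<lambda>s. s ! l) rs)) [0..<m])"
      hence l: "l < m" by simp
      have "map (\<lambda>s. s ! l) rs = bs[i := r ! l]"
        using l bs i by (auto intro!: nth_equalityI simp: rs_def tuples_def nth_list_update)
      moreover have "r ! l \<in> A" using r' l by auto
      ultimately show "map (\<lambda>l. f (map (\<lambda>s. s ! l) rs)) [0..<m] ! l = map g r ! l"
        using l r' by (simp add: g)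
    qed (simp add: r')
    ultimately show "map g r \<in> snd (m,\<rho>)" by simp
  qed
qed

lemma pres_from_trl:
  assumes F: "(n,f) \<in> Ops A" and gq: "is_gquord A (m,\<rho>)" and A: "A \<noteq> {}"
    and tr: "\<forall>g\<in>trl A (n,f). preserves_map g (m,\<rho>)"
  shows "preserves (n,f) (m,\<rho>)"
proof -
  have rel: "\<And>r. r \<in> \<rho> \<Longrightarrow> set r \<subseteq> A \<and> length r = m" using Rel_mem[OF gq_rel[OF gq]] by blast
  have claim: "\<forall>rs bs. length rs = n \<and> set rs \<subseteq> \<rho> \<and> bs \<in> tuples A n \<longrightarrow>
      map (\<lambda>l. f (map (\<lambda>p. if p < j then rs!p!l else bs!p) [0..<n])) [0..<m] \<in> \<rho>"
    if "j \<le> n" for j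
    using that
  proof (induction j)
    case 0
    show ?case
    proof (intro allI impI)
      fix rs bs assume h: "length rs = n \<and> set rs \<subseteq> \<rho> \<and> bs \<in> tuples A n"
      have "map (\<lambda>p. bs ! p) [0..<n] = bs" using h by (auto simp: tuples_def intro: nth_equalityI)
      hence "map (\<lambda>l. f (map (\<lambda>p. if p < 0 then rs!p!l else bs!p) [0..<n])) [0..<m] = replicate m (f bs)"
        by (simp add: map_replicate_const)
      moreover have "f bs \<in> A" using Ops_mem[OF F] h by blast
      ultimately show "map (\<lambda>l. f (map (\<lambda>p. if p < 0 then rs!p!l else bs!p) [0..<n])) [0..<m] \<in> \<rho>"
        using gq_refl[OF gq] by simp
    qed
  next
    case (Suc j)
    hence jn: "j < n" by simp
    have IH: "\<And>rs bs. length rs = n \<Longrightarrow> set rs \<subseteq> \<rho> \<Longrightarrow> bs \<in> tuples A n \<Longrightarrow>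
      map (\<lambda>l. f (map (\<lambda>p. if p < j then rs!p!l else bs!p) [0..<n])) [0..<m] \<in> \<rho>"
      using Suc by simp
    show ?case
    proof (intro allI impI)
      fix rs bs assume h: "length rs = n \<and> set rs \<subseteq> \<rho> \<and> bs \<in> tuples A n"
      have rsj: "rs ! j \<in> \<rho>" using h jn by (auto simp: set_conv_nth)
      have rsA: "\<And>p l. p < n \<Longrightarrow> l < m \<Longrightarrow> rs ! p ! l \<in> A"
      proof -
        fix p l assume "p < n" "l < m"
        hence "rs ! p \<in> \<rho>" using h by (auto simp: set_conv_nth)
        thus "rs ! p ! l \<in> A" using rel[of "rs!p"] \<open>l < m\<close> nth_mem by blast
      qed
      have bsA: "\<And>p. p < n \<Longrightarrow> bs ! p \<in> A" using h nth_mem by (fastforce simp: tuples_def)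
      define X where "X = (\<lambda>i l. f (map (\<lambda>p. if p < j then rs!p!i else if p = j then rs!j!l else bs!p) [0..<n]))"
      have "map (\<lambda>i. X i i) [0..<m] \<in> \<rho>"
      proof (rule gq_diag[OF gq, of X])
        fix i assume i: "i < m"
        define cs where "cs = map (\<lambda>p. if p < j then rs!p!i else bs!p) [0..<n]"
        have cs: "cs \<in> tuples A n" using h rsA bsA i by (auto simp: cs_def tuples_def)
        define g where "g = restrict (\<lambda>x. f (cs[j := x])) A"
        have "g \<in> trl A (n,f)" unfolding trl_def g_def using cs jn by auto
        hence "map g (rs ! j) \<in> \<rho>" using tr rsj by (auto simp: preserves_map_def)
        moreover have "map g (rs ! j) = map (\<lambda>l. X i l) [0..<m]"
        proof (rule nth_equalityI)
          show "length (map g (rs ! j)) = length (map (\<lambda>l. X i l) [0..<m])" using rel rsj by simp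
          fix l assume "l < length (map g (rs ! j))"
          hence l: "l < m" using rel rsj by simp
          have "cs[j := rs!j!l] = map (\<lambda>p. if p < j then rs!p!i else if p = j then rs!j!l else bs!p) [0..<n]"
            by (auto intro!: nth_equalityI simp: cs_def nth_list_update)
          hence "g (rs!j!l) = X i l"
            using l rel rsj rsA jn by (simp add: g_def X_def)
          moreover have "map (\<lambda>l. X i l) [0..<m] ! l = X i l" using l by simp
          moreover have "map g (rs ! j) ! l = g (rs!j!l)" using l rel rsj by simp
          ultimately show "map g (rs ! j) ! l = map (\<lambda>l. X i l) [0..<m] ! l" by simp
        qed
        ultimately show "map (\<lambda>l. X i l) [0..<m] \<in> \<rho>" by simp
      next
        fix l assume l: "l < m"
        define bs' where "bs' = bs[j := rs!j!l]"
        have bs': "bs' \<in> tuples A n" proof -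
          have "set bs' \<subseteq> insert (rs!j!l) (set bs)" unfolding bs'_def by (rule set_update_subset_insert)
          moreover have "rs!j!l \<in> A" using rsA l jn by blast
          ultimately show ?thesis using h by (auto simp: bs'_def tuples_def)
        qed
        have "map (\<lambda>i. f (map (\<lambda>p. if p < j then rs!p!i else bs'!p) [0..<n])) [0..<m] \<in> \<rho>"
          using IH h bs' by blast
        moreover have "map (\<lambda>i. f (map (\<lambda>p. if p < j then rs!p!i else bs'!p) [0..<n])) [0..<m]
            = map (\<lambda>i. X i l) [0..<m]"
        proof -
          have eq: "\<And>i. map (\<lambda>p. if p < j then rs!p!i else bs'!p) [0..<n] =
             map (\<lambda>p. if p < j then rs!p!i else if p = j then rs!j!l else bs!p) [0..<n]"
            using h jn by (auto intro!: map_cong simp: bs'_def nth_list_update tuples_def)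
          show ?thesis by (simp only: X_def eq)
        qed
        ultimately show "map (\<lambda>i. X i l) [0..<m] \<in> \<rho>" by simp
      qed
      moreover have "map (\<lambda>i. X i i) [0..<m] = map (\<lambda>l. f (map (\<lambda>p. if p < Suc j then rs!p!l else bs!p) [0..<n])) [0..<m]"
      proof -
        have "\<And>l. map (\<lambda>p. if p < j then rs!p!l else if p = j then rs!j!l else bs!p) [0..<n]
           = map (\<lambda>p. if p < Suc j then rs!p!l else bs!p) [0..<n]"
          by (auto intro!: map_cong simp: less_Suc_eq)
        thus ?thesis by (simp only: X_def)
      qed
      ultimately show "map (\<lambda>l. f (map (\<lambda>p. if p < Suc j then rs!p!l else bs!p) [0..<n])) [0..<m] \<in> \<rho>"
        by simp
    qed
  qed
  obtain a where a: "a \<in> A" using A by blast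
  show ?thesis unfolding preserves_def
  proof (simp, intro allI impI)
    fix rs assume h: "length rs = n \<and> set rs \<subseteq> \<rho>"
    have "replicate n a \<in> tuples A n" using a by (simp add: tuples_def set_replicate_conv_if)
    hence "map (\<lambda>l. f (map (\<lambda>p. if p < n then rs!p!l else replicate n a!p) [0..<n])) [0..<m] \<in> \<rho>"
      using claim[of n] h by blast
    moreover have "\<And>l. map (\<lambda>p. if p < n then rs!p!l else replicate n a!p) [0..<n] = map (\<lambda>r. r ! l) rs"
      using h by (auto intro!: nth_equalityI)
    ultimately show "map (\<lambda>i. f (map (\<lambda>r. r ! i) rs)) [0..<m] \<in> \<rho>" by simp
  qed
qed


lemma gQuord_Rel: "Q \<subseteq> gQuord A \<Longrightarrow> Q \<subseteq> Rel A"
  by (auto simp: gQuord_def is_gquord_def)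

lemma trl_PiE: "(n,f) \<in> Ops A \<Longrightarrow> g \<in> trl A (n,f) \<Longrightarrow> g \<in> A \<rightarrow>\<^sub>E A"
proof -
  assume F: "(n,f) \<in> Ops A" and "g \<in> trl A (n,f)"
  then obtain i bs where g: "g = restrict (\<lambda>x. f (bs[i := x])) A" and i: "i < n" and bs: "bs \<in> tuples A n"
    by (auto simp: trl_def)
  have "\<And>x. x \<in> A \<Longrightarrow> bs[i := x] \<in> tuples A n"
    using bs by (auto simp: tuples_def dest: subsetD[OF set_update_subset_insert])
  thus ?thesis using Ops_mem[OF F] by (auto simp: g)
qed

lemma star_End_eq_Pol:
  assumes A: "A \<noteq> {}" and Q: "Q \<subseteq> gQuord A"
  shows "star A (End A Q) = Pol A Q"
proof
  show "star A (End A Q) \<subseteq> Pol A Q"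
  proof
    fix F assume F: "F \<in> star A (End A Q)"
    obtain n f where nf: "F = (n,f)" by (cases F)
    have "\<forall>R\<in>Q. preserves F R"
    proof
      fix R assume R: "R \<in> Q"
      obtain m \<rho> where R': "R = (m,\<rho>)" by (cases R)
      have gq: "is_gquord A (m,\<rho>)" using Q R R' by (auto simp: gQuord_def)
      have "\<forall>g\<in>trl A (n,f). preserves_map g (m,\<rho>)" using F R R' nf by (auto simp: star_def End_def)
      thus "preserves F R" using pres_from_trl[OF _ gq A] F nf R' by (auto simp: star_def)
    qed
    thus "F \<in> Pol A Q" using F by (auto simp: star_def Pol_def)
  qed
next
  show "Pol A Q \<subseteq> star A (End A Q)"
  proof
    fix F assume F: "F \<in> Pol A Q"
    obtain n f where nf: "F = (n,f)" by (cases F)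
    have "trl A F \<subseteq> End A Q"
    proof
      fix g assume g: "g \<in> trl A F"
      have "g \<in> A \<rightarrow>\<^sub>E A" using F nf g by (intro trl_PiE[of n f]) (auto simp: Pol_def)
      moreover have "\<forall>R\<in>Q. preserves_map g R"
      proof
        fix R assume R: "R \<in> Q"
        obtain m \<rho> where R': "R = (m,\<rho>)" by (cases R)
        have gq: "is_gquord A (m,\<rho>)" using Q R R' by (auto simp: gQuord_def)
        show "preserves_map g R" using trl_pres_refl[OF _ gq] F nf R R' g by (auto simp: Pol_def)
      qed
      ultimately show "g \<in> End A Q" by (simp add: End_def)
    qed
    thus "F \<in> star A (End A Q)" using F by (auto simp: star_def Pol_def)
  qed
qed

lemma proj_Ops: "1 \<le> n \<Longrightarrow> i < n \<Longrightarrow> proj A n i \<in> Ops A"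
  by (auto simp: proj_def Ops_def tuples_def)

lemma clone_Pol:
  assumes Q: "Q \<subseteq> Rel A"
  shows "clone A (Pol A Q)"
  unfolding clone_def
proof (intro conjI allI impI)
  show "Pol A Q \<subseteq> Ops A" by (auto simp: Pol_def)
next
  fix n i :: nat assume ni: "1 \<le> n \<and> i < n"
  have "\<forall>R\<in>Q. preserves (proj A n i) R"
  proof
    fix R assume R: "R \<in> Q"
    obtain m \<rho> where R': "R = (m,\<rho>)" by (cases R)
    have rel: "\<And>r. r \<in> \<rho> \<Longrightarrow> set r \<subseteq> A \<and> length r = m" using Rel_mem Q R R' by blast
    show "preserves (proj A n i) R" unfolding R' proj_def preserves_def
    proof (simp, intro allI impI)
      fix rs assume h: "length rs = n \<and> set rs \<subseteq> \<rho>"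
      have ri: "rs ! i \<in> \<rho>" using h ni by auto
      have "map (\<lambda>l. if map (\<lambda>r. r ! l) rs \<in> tuples A n then map (\<lambda>r. r ! l) rs ! i else undefined) [0..<m] = rs ! i"
      proof (rule nth_equalityI)
        show "length (map (\<lambda>l. if map (\<lambda>r. r ! l) rs \<in> tuples A n then map (\<lambda>r. r ! l) rs ! i else undefined) [0..<m]) = length (rs ! i)"
          using rel ri by simp
        fix l assume "l < length (map (\<lambda>l. if map (\<lambda>r. r ! l) rs \<in> tuples A n then map (\<lambda>r. r ! l) rs ! i else undefined) [0..<m])"
        hence l: "l < m" by simp
        have "map (\<lambda>r. r ! l) rs \<in> tuples A n"
          using h l rel nth_mem by (fastforce simp: tuples_def)
        thus "map (\<lambda>l. if map (\<lambda>r. r ! l) rs \<in> tuples A n then map (\<lambda>r. r ! l) rs ! i else undefined) [0..<m] ! l = rs ! i ! l"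
          using l h ni by simp
      qed
      thus "map (\<lambda>l. if map (\<lambda>r. r ! l) rs \<in> tuples A n then map (\<lambda>r. r ! l) rs ! i else undefined) [0..<m] \<in> \<rho>"
        using ri by simp
    qed
  qed
  thus "proj A n i \<in> Pol A Q" using proj_Ops ni by (auto simp: Pol_def)
next
  fix n f m gs assume h: "(n, f) \<in> Pol A Q \<and> 1 \<le> m \<and> length gs = n \<and> (\<forall>g\<in>set gs. (m, g) \<in> Pol A Q)"
  have fO: "(n,f) \<in> Ops A" using h by (auto simp: Pol_def)
  have gO: "\<And>g. g \<in> set gs \<Longrightarrow> (m,g) \<in> Ops A" using h by (auto simp: Pol_def)
  have "superpos A m f gs \<in> Ops A"
  proof -
    have "\<And>xs. xs \<in> tuples A m \<Longrightarrow> map (\<lambda>g. g xs) gs \<in> tuples A n"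
      using h Ops_mem[OF gO] by (auto simp: tuples_def)
    thus ?thesis using h Ops_mem[OF fO] by (auto simp: superpos_def Ops_def)
  qed
  moreover have "\<forall>R\<in>Q. preserves (superpos A m f gs) R"
  proof
    fix R assume R: "R \<in> Q"
    obtain p \<rho> where R': "R = (p,\<rho>)" by (cases R)
    have rel: "\<And>r. r \<in> \<rho> \<Longrightarrow> set r \<subseteq> A \<and> length r = p" using Rel_mem Q R R' by blast
    have fp: "preserves (n,f) (p,\<rho>)" using h R R' by (auto simp: Pol_def)
    have gp: "\<And>g. g \<in> set gs \<Longrightarrow> preserves (m,g) (p,\<rho>)" using h R R' by (auto simp: Pol_def)
    show "preserves (superpos A m f gs) R" unfolding R' superpos_def preserves_def
    proof (simp, intro allI impI)
      fix rs assume rs: "length rs = m \<and> set rs \<subseteq> \<rho>"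
      have col: "\<And>l. l < p \<Longrightarrow> map (\<lambda>r. r ! l) rs \<in> tuples A m"
        using rs rel nth_mem by (fastforce simp: tuples_def)
      define ss where "ss = map (\<lambda>g. map (\<lambda>l. g (map (\<lambda>r. r ! l) rs)) [0..<p]) gs"
      have "length ss = n" using h by (simp add: ss_def)
      moreover have "set ss \<subseteq> \<rho>"
        using gp rs by (auto simp: ss_def preserves_def)
      ultimately have "map (\<lambda>l. f (map (\<lambda>s. s ! l) ss)) [0..<p] \<in> \<rho>"
        using fp by (auto simp: preserves_def)
      moreover have "map (\<lambda>l. f (map (\<lambda>s. s ! l) ss)) [0..<p] =
        map (\<lambda>l. if map (\<lambda>r. r ! l) rs \<in> tuples A m then f (map (\<lambda>g. g (map (\<lambda>r. r ! l) rs)) gs) else undefined) [0..<p]"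
        using col by (auto simp: ss_def intro!: map_cong arg_cong[where f=f])
      ultimately show "map (\<lambda>l. if map (\<lambda>r. r ! l) rs \<in> tuples A m then f (map (\<lambda>g. g (map (\<lambda>r. r ! l) rs)) gs) else undefined) [0..<p] \<in> \<rho>"
        by simp
    qed
  qed
  ultimately show "superpos A m f gs \<in> Pol A Q" by (simp add: Pol_def)
qed

lemma monoid_End:
  assumes Q: "Q \<subseteq> Rel A"
  shows "monoid_on A (End A Q)"
  unfolding monoid_on_def
proof (intro conjI ballI)
  show "End A Q \<subseteq> A \<rightarrow>\<^sub>E A" by (auto simp: End_def)
  have "\<And>R r. R \<in> Q \<Longrightarrow> r \<in> snd R \<Longrightarrow> set r \<subseteq> A"
  proof -
    fix R r assume "R \<in> Q" "r \<in> snd R"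
    hence "(fst R, snd R) \<in> Rel A" using Q by auto
    thus "set r \<subseteq> A" using Rel_mem \<open>r \<in> snd R\<close> by blast
  qed
  hence mapid: "\<And>R r. R \<in> Q \<Longrightarrow> r \<in> snd R \<Longrightarrow> map (restrict id A) r = r"
    by (metis (no_types, lifting) id_apply map_idI restrict_apply' subsetD)
  show "restrict id A \<in> End A Q"
    using mapid by (auto simp: End_def preserves_map_def)
  fix g h assume g: "g \<in> End A Q" and h: "h \<in> End A Q"
  have cm: "\<And>R r. R \<in> Q \<Longrightarrow> r \<in> snd R \<Longrightarrow> map (compose A g h) r = map g (map h r)"
    using \<open>\<And>R r. R \<in> Q \<Longrightarrow> r \<in> snd R \<Longrightarrow> set r \<subseteq> A\<close> by (auto simp: compose_def)
  have "compose A g h \<in> A \<rightarrow>\<^sub>E A"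
    using g h by (auto simp: End_def compose_def)
  moreover have "\<forall>R\<in>Q. preserves_map (compose A g h) R"
    unfolding preserves_map_def
  proof (intro ballI)
    fix R r assume R: "R \<in> Q" and r: "r \<in> snd R"
    have "map h r \<in> snd R" using h R r by (auto simp: End_def preserves_map_def)
    hence "map g (map h r) \<in> snd R" using g R unfolding End_def preserves_map_def by blast
    thus "map (compose A g h) r \<in> snd R" by (simp only: cm[OF R r])
  qed
  ultimately show "compose A g h \<in> End A Q"
    by (auto simp: End_def)
qed


definition idx :: "'a list \<Rightarrow> 'a \<Rightarrow> nat" where
  "idx as a = (SOME p. p < length as \<and> as ! p = a)"

lemma idx: "a \<in> set as \<Longrightarrow> idx as a < length as \<and> as ! idx as a = a"
  unfolding idx_def by (rule someI_ex) (simp add: in_set_conv_nth)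

lemma idx_nth: "distinct as \<Longrightarrow> p < length as \<Longrightarrow> idx as (as ! p) = p"
  using idx[of "as!p" as] nth_eq_iff_index_eq by fastforce

lemma Gamma_iff: "r \<in> snd (Gamma as M) \<longleftrightarrow> (\<exists>g\<in>M. r = map g as)"
  by (auto simp: Gamma_def)

lemma star_trl: "(n,f) \<in> star A M \<Longrightarrow> i < n \<Longrightarrow> bs \<in> tuples A n \<Longrightarrow> restrict (\<lambda>x. f (bs[i:=x])) A \<in> M"
  unfolding star_def trl_def by blast

lemma Gamma_pres:
  assumes M: "monoid_on A M" and as: "set as = A" and g: "g \<in> M"
  shows "preserves_map g (Gamma as M)"
  unfolding preserves_map_def
proof
  fix r assume "r \<in> snd (Gamma as M)"
  then obtain h where r: "r = map h as" and h: "h \<in> M" by (auto simp: Gamma_iff)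
  have "compose A g h \<in> M" using M g h by (auto simp: monoid_on_def)
  moreover have "map g (map h as) = map (compose A g h) as" using as by (auto simp: compose_def)
  ultimately show "map g r \<in> snd (Gamma as M)" using r by (auto simp: Gamma_iff)
qed

lemma Gamma_mem:
  assumes M: "monoid_on A M" and as: "set as = A" and g: "g \<in> A \<rightarrow>\<^sub>E A"
    and p: "preserves_map g (Gamma as M)"
  shows "g \<in> M"
proof -
  have "restrict id A \<in> M" using M by (simp add: monoid_on_def)
  moreover have "map (restrict id A) as = as" using as by (auto intro!: map_idI)
  ultimately have "as \<in> snd (Gamma as M)" unfolding Gamma_iff by metis
  hence "map g as \<in> snd (Gamma as M)" using p by (simp add: preserves_map_def)
  then obtain h where h: "h \<in> M" "map g as = map h as" by (auto simp: Gamma_def)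
  have "h \<in> A \<rightarrow>\<^sub>E A" using M h by (auto simp: monoid_on_def)
  hence "g = h" using g h as by (auto simp: fun_eq_iff PiE_def extensional_def)
  thus ?thesis using h by simp
qed

lemma Gamma_End:
  assumes M: "monoid_on A M" and as: "set as = A"
  shows "End A {Gamma as M} = M"
  using Gamma_mem[OF M as] Gamma_pres[OF M as] M by (auto simp: End_def monoid_on_def)

lemma Gamma_gquord:
  assumes A: "A \<noteq> {}" and dist: "distinct as" and as: "set as = A"
    and M: "monoid_on A M" and cl: "clone A (star A M)"
  shows "Gamma as M \<in> gQuord A"
proof -
  define k where "k = length as"
  have MP: "M \<subseteq> A \<rightarrow>\<^sub>E A" using M by (simp add: monoid_on_def)
  have rel: "Gamma as M \<in> Rel A"
  proof -
    have "1 \<le> k" using A as by (cases as) (auto simp: k_def)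
    moreover have "\<And>g. g \<in> M \<Longrightarrow> map g as \<in> tuples A k" using MP as by (auto simp: tuples_def k_def)
    ultimately show ?thesis by (auto simp: Gamma_def Rel_def k_def)
  qed
  have projS: "\<And>n i. 1 \<le> n \<Longrightarrow> i < n \<Longrightarrow> proj A n i \<in> star A M" using cl by (simp add: clone_def)
  have refl: "\<forall>a\<in>A. replicate k a \<in> snd (Gamma as M)"
  proof
    fix a assume a: "a \<in> A"
    have P: "(2::nat, \<lambda>xs. if xs \<in> tuples A 2 then xs ! Suc 0 else undefined) \<in> star A M"
      using projS[of 2 1] by (simp add: proj_def One_nat_def)
    have "[a,a] \<in> tuples A 2" using a by (simp add: tuples_def)
    from star_trl[OF P _ this, of 0]
    have "restrict (\<lambda>x. if [a,a][0 := x] \<in> tuples A 2 then [a,a][0 := x] ! Suc 0 else undefined) A \<in> M" by simp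
    moreover have "restrict (\<lambda>x. if [a,a][0 := x] \<in> tuples A 2 then [a,a][0 := x] ! Suc 0 else undefined) A
        = restrict (\<lambda>x. a) A" using a by (auto simp: tuples_def)
    ultimately have "restrict (\<lambda>x. a) A \<in> M" by simp
    moreover have "map (restrict (\<lambda>x. a) A) as = replicate k a"
      using as by (auto simp: k_def intro!: nth_equalityI)
    ultimately show "replicate k a \<in> snd (Gamma as M)" unfolding Gamma_iff by metis
  qed
  have diag: "map (\<lambda>i. X i i) [0..<k] \<in> snd (Gamma as M)"
    if rows: "\<forall>i<k. map (\<lambda>j. X i j) [0..<k] \<in> snd (Gamma as M)"
    and cols: "\<forall>j<k. map (\<lambda>i. X i j) [0..<k] \<in> snd (Gamma as M)" for X
  proof -
    have rowg: "\<exists>g\<in>M. \<forall>x\<in>A. g x = X i (idx as x)" if i: "i < k" for i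
    proof -
      obtain g where g: "g \<in> M" "map (\<lambda>j. X i j) [0..<k] = map g as" using rows i by (auto simp: Gamma_def)
      have "\<forall>x\<in>A. g x = X i (idx as x)"
      proof
        fix x assume x: "x \<in> A"
        have "map g as ! idx as x = map (\<lambda>j. X i j) [0..<k] ! idx as x" using g by simp
        thus "g x = X i (idx as x)" using idx[of x as] x as by (simp add: k_def)
      qed
      thus ?thesis using g by blast
    qed
    have colg: "\<exists>g\<in>M. \<forall>x\<in>A. g x = X (idx as x) j" if j: "j < k" for j
    proof -
      obtain g where g: "g \<in> M" "map (\<lambda>i. X i j) [0..<k] = map g as" using cols j by (auto simp: Gamma_def)
      have "\<forall>x\<in>A. g x = X (idx as x) j"
      proof
        fix x assume x: "x \<in> A"
        have "map g as ! idx as x = map (\<lambda>i. X i j) [0..<k] ! idx as x" using g by simp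
        thus "g x = X (idx as x) j" using idx[of x as] x as by (simp add: k_def)
      qed
      thus ?thesis using g by blast
    qed
    have XA: "X i j \<in> A" if ij: "i < k" "j < k" for i j
    proof -
      obtain g where g: "g \<in> M" "map (\<lambda>j. X i j) [0..<k] = map g as" using rows ij by (auto simp: Gamma_def)
      have "map g as ! j = X i j" using g ij by (metis diff_zero length_upt nth_map nth_upt plus_nat.add_0)
      moreover have "map g as ! j \<in> A"
      proof -
        have gA: "g \<in> A \<rightarrow>\<^sub>E A" using MP g by blast
        have "as ! j \<in> A" using ij as by (auto simp: k_def)
        from PiE_mem[OF gA this] show ?thesis using ij by (simp add: k_def)
      qed
      ultimately show ?thesis by simp
    qed
    define f where "f = (\<lambda>xs. if xs \<in> tuples A 2 then X (idx as (xs!0)) (idx as (xs!1)) else undefined)"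
    have idxk: "\<And>x. x \<in> A \<Longrightarrow> idx as x < k" using idx[of _ as] as by (auto simp: k_def)
    have fO: "(2,f) \<in> Ops A"
    proof -
      have "\<And>xs. xs \<in> tuples A 2 \<Longrightarrow> xs!0 \<in> A \<and> xs!1 \<in> A" by (auto simp: tuples_def)
      thus ?thesis using XA idxk by (auto simp: Ops_def f_def)
    qed
    have "trl A (2,f) \<subseteq> M"
    proof
      fix t assume "t \<in> trl A (2,f)"
      then obtain i bs where t: "t = restrict (\<lambda>x. f (bs[i := x])) A" and i: "i < 2" and bs: "bs \<in> tuples A 2"
        by (auto simp: trl_def)
      have bsA: "bs!0 \<in> A" "bs!1 \<in> A" using bs by (auto simp: tuples_def)
      have upd: "\<And>x. x \<in> A \<Longrightarrow> bs[i := x] \<in> tuples A 2"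
        using bs by (auto simp: tuples_def dest: subsetD[OF set_update_subset_insert])
      show "t \<in> M"
      proof (cases "i = 0")
        case True
        obtain g where g: "g \<in> M" "\<forall>x\<in>A. g x = X (idx as x) (idx as (bs!1))" using colg idxk bsA by blast
        have "t = g"
        proof
          fix x show "t x = g x"
          proof (cases "x \<in> A")
            case True thus ?thesis using g upd[OF True] \<open>i = 0\<close> bs by (auto simp: t f_def tuples_def)
          next
            case False thus ?thesis using g MP by (auto simp: t PiE_def extensional_def)
          qed
        qed
        thus ?thesis using g by simp
      next
        case False
        hence i1: "i = 1" using i by simp
        obtain g where g: "g \<in> M" "\<forall>x\<in>A. g x = X (idx as (bs!0)) (idx as x)" using rowg idxk bsA by blast
        have "t = g"
        proof
          fix x show "t x = g x"
          proof (cases "x \<in> A")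
            case True thus ?thesis using g upd[OF True] i1 bs by (auto simp: t f_def tuples_def)
          next
            case False thus ?thesis using g MP by (auto simp: t PiE_def extensional_def)
          qed
        qed
        thus ?thesis using g by simp
      qed
    qed
    hence fS: "(2,f) \<in> star A M" using fO by (simp add: star_def)
    obtain pf where pf: "proj A 1 0 = (1, pf)" by (simp add: proj_def)
    have pfS: "(1,pf) \<in> star A M" using projS[of 1 0] pf by simp
    have C: "\<And>n f m gs. (n, f) \<in> star A M \<Longrightarrow> 1 \<le> m \<Longrightarrow> length gs = n \<Longrightarrow> (\<forall>g\<in>set gs. (m, g) \<in> star A M) \<Longrightarrow> superpos A m f gs \<in> star A M"
      using cl unfolding clone_def by blast
    have SP0: "superpos A 1 f [pf,pf] \<in> star A M" using C[OF fS, of 1 "[pf,pf]"] pfS by simp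
    note SP = SP0[unfolded superpos_def]
    obtain a where a: "a \<in> A" using A by blast
    have "[a] \<in> tuples A 1" using a by (simp add: tuples_def)
    from star_trl[OF SP _ this, of 0]
    have "restrict (\<lambda>x. (\<lambda>xs. if xs \<in> tuples A 1 then f (map (\<lambda>g. g xs) [pf,pf]) else undefined) ([a][0 := x])) A \<in> M"
      by simp
    moreover have "restrict (\<lambda>x. (\<lambda>xs. if xs \<in> tuples A 1 then f (map (\<lambda>g. g xs) [pf,pf]) else undefined) ([a][0 := x])) A
       = restrict (\<lambda>x. X (idx as x) (idx as x)) A"
      using pf by (auto simp: proj_def tuples_def f_def)
    ultimately have dM: "restrict (\<lambda>x. X (idx as x) (idx as x)) A \<in> M" by simp
    have "map (restrict (\<lambda>x. X (idx as x) (idx as x)) A) as = map (\<lambda>i. X i i) [0..<k]"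
      using as dist by (auto intro!: nth_equalityI simp: k_def idx_nth)
    thus ?thesis using dM unfolding Gamma_iff by metis
  qed
  show ?thesis unfolding gQuord_def is_gquord_def
    using rel refl diag by (auto simp: Gamma_def k_def)
qed


lemma ubar_upper: "M \<subseteq> N \<Longrightarrow> monoid_on A N \<Longrightarrow> clone A (star A N) \<Longrightarrow> ubar A M \<subseteq> N"
  unfolding ubar_def by blast

lemma ubar_lower: "M \<subseteq> ubar A M"
  unfolding ubar_def by blast

lemma End_good:
  assumes A: "A \<noteq> {}" and Q: "Q \<subseteq> gQuord A"
  shows "monoid_on A (End A Q) \<and> clone A (star A (End A Q))"
  using monoid_End[OF gQuord_Rel[OF Q]] star_End_eq_Pol[OF A Q] clone_Pol[OF gQuord_Rel[OF Q]] by simp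

lemma ubar_eq:
  assumes A: "A \<noteq> {}" and dist: "distinct as" and as: "set as = A"
    and M: "M \<subseteq> A \<rightarrow>\<^sub>E A"
  shows "ubar A M = End A (gQuordM A M)"
proof
  have Q: "gQuordM A M \<subseteq> gQuord A" by (auto simp: gQuordM_def)
  have "M \<subseteq> End A (gQuordM A M)" using M by (auto simp: End_def gQuordM_def)
  thus "ubar A M \<subseteq> End A (gQuordM A M)"
    using End_good[OF A Q] ubar_upper by blast
next
  show "End A (gQuordM A M) \<subseteq> ubar A M"
    unfolding ubar_def
  proof (rule Inter_greatest)
    fix N assume "N \<in> {N. M \<subseteq> N \<and> monoid_on A N \<and> clone A (star A N)}"
    hence MN: "M \<subseteq> N" and mN: "monoid_on A N" and cN: "clone A (star A N)" by auto
    have G: "Gamma as N \<in> gQuord A" by (rule Gamma_gquord[OF A dist as mN cN])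
    have "Gamma as N \<in> gQuordM A M" using G Gamma_pres[OF mN as] MN by (auto simp: gQuordM_def)
    thus "End A (gQuordM A M) \<subseteq> N"
      using Gamma_mem[OF mN as] by (auto simp: End_def)
  qed
qed

lemma partb:
  assumes A: "A \<noteq> {}" and dist: "distinct as" and as: "set as = A"
    and M: "monoid_on A M"
  shows "(u_closed A M \<longleftrightarrow> clone A (star A M))
    \<and> (u_closed A M \<longleftrightarrow> Gamma as M \<in> gQuord A)
    \<and> (u_closed A M \<longleftrightarrow> (\<exists>Q \<subseteq> gQuord A. M = End A Q))
    \<and> (u_closed A M \<longleftrightarrow> (\<exists>Q \<subseteq> gQuord A. star A M = Pol A Q))
    \<and> (u_closed A M \<longleftrightarrow> (\<exists>Q \<subseteq> gQuord A. M = End A Q \<and> star A M = Pol A Q))"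
proof -
  have MP: "M \<subseteq> A \<rightarrow>\<^sub>E A" using M by (simp add: monoid_on_def)
  have 1: "clone A (star A M)" if "u_closed A M"
  proof -
    have "M = End A (gQuordM A M)" using that ubar_eq[OF A dist as MP] by (simp add: u_closed_def)
    moreover have "gQuordM A M \<subseteq> gQuord A" by (auto simp: gQuordM_def)
    ultimately show ?thesis using End_good[OF A] by metis
  qed
  have 2: "Gamma as M \<in> gQuord A" if "clone A (star A M)"
    using Gamma_gquord[OF A dist as M that] .
  have 3: "M = End A {Gamma as M} \<and> star A M = Pol A {Gamma as M}" if "Gamma as M \<in> gQuord A"
  proof -
    have e: "M = End A {Gamma as M}" using Gamma_End[OF M as] by simp
    have "star A M = Pol A {Gamma as M}" using star_End_eq_Pol[OF A, of "{Gamma as M}"] that e by simp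
    thus ?thesis using e by simp
  qed
  have 4: "u_closed A M" if "Q \<subseteq> gQuord A" "M = End A Q" for Q
  proof -
    have "ubar A M \<subseteq> M" using End_good[OF A that(1)] that(2) ubar_upper[of M M A] by simp
    thus ?thesis using ubar_lower[of M A] by (simp add: u_closed_def)
  qed
  have 5: "clone A (star A M)" if "Q \<subseteq> gQuord A" "star A M = Pol A Q" for Q
    using clone_Pol[OF gQuord_Rel[OF that(1)]] that(2) by simp
  show ?thesis
  proof (intro conjI)
    show "u_closed A M \<longleftrightarrow> clone A (star A M)" using 1 2 3 4 by blast
    show "u_closed A M \<longleftrightarrow> Gamma as M \<in> gQuord A" using 1 2 3 4 by blast
    show "u_closed A M \<longleftrightarrow> (\<exists>Q \<subseteq> gQuord A. M = End A Q)"
      using 1 2 3 4 by (metis empty_subsetI insert_subset)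
    show "u_closed A M \<longleftrightarrow> (\<exists>Q \<subseteq> gQuord A. star A M = Pol A Q)"
      using 1 2 3 4 5 by (metis empty_subsetI insert_subset)
    show "u_closed A M \<longleftrightarrow> (\<exists>Q \<subseteq> gQuord A. M = End A Q \<and> star A M = Pol A Q)"
      using 1 2 3 4 by (metis empty_subsetI insert_subset)
  qed
qed


definition Inv :: "'a set \<Rightarrow> ('a \<Rightarrow> 'a) set \<Rightarrow> (nat \<times> 'a list set) set" where
  "Inv A N = {R \<in> Rel A. \<forall>g\<in>N. preserves_map g R}"

lemma holds_End:
  assumes "pform_over Q \<phi>" "g \<in> End A Q" "\<forall>i. v i \<in> A" "holds A \<phi> v"
  shows "holds A \<phi> (g \<circ> v)"
  using assms
proof (induction \<phi> arbitrary: v)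
  case (PAtom R xs)
  hence "map v xs \<in> snd R" "R \<in> Q" by auto
  hence "map g (map v xs) \<in> snd R" using PAtom.prems(2) unfolding End_def preserves_map_def by blast
  thus ?case by (metis holds.simps(1) map_map)
next
  case (PEx i \<phi>)
  then obtain a where a: "a \<in> A" "holds A \<phi> (v(i := a))" by auto
  have "\<forall>j. (v(i := a)) j \<in> A" using a PEx.prems by auto
  moreover have ov: "pform_over Q \<phi>" using PEx.prems(1) by simp
  ultimately have "holds A \<phi> (g \<circ> v(i := a))" using PEx.IH[OF ov PEx.prems(2)] a by blast
  moreover have "g \<circ> v(i := a) = (g \<circ> v)(i := g a)" by (auto simp: fun_eq_iff)
  moreover have "g a \<in> A" using a PEx.prems(2) by (auto simp: End_def)
  ultimately have "holds A \<phi> ((g \<circ> v)(i := g a))" "g a \<in> A" by simp_all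
  thus ?case by (simp only: holds.simps) blast
qed auto

lemma pos_sub_Inv: "pos_def A Q \<subseteq> Inv A (End A Q)"
proof
  fix R assume "R \<in> pos_def A Q"
  then obtain \<phi> ys where R: "R = (length ys, {map v ys | v. (\<forall>i. v i \<in> A) \<and> holds A \<phi> v})"
    and ys: "ys \<noteq> []" and ph: "pform_over Q \<phi>" by (auto simp: pos_def_def)
  have "R \<in> Rel A" using ys by (auto simp: R Rel_def tuples_def Suc_le_eq)
  moreover have "\<forall>g\<in>End A Q. preserves_map g R"
  proof (intro ballI)
    fix g assume g: "g \<in> End A Q"
    show "preserves_map g R" unfolding preserves_map_def
    proof
      fix r assume "r \<in> snd R"
      then obtain v where r: "r = map v ys" and v: "\<forall>i. v i \<in> A" "holds A \<phi> v" by (auto simp: R)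
      have "\<forall>i. (g \<circ> v) i \<in> A" using g v by (auto simp: End_def)
      moreover have "holds A \<phi> (g \<circ> v)" using holds_End[OF ph g v] .
      moreover have "map g r = map (g \<circ> v) ys" by (simp add: r)
      ultimately have "\<exists>v'. map g r = map v' ys \<and> (\<forall>i. v' i \<in> A) \<and> holds A \<phi> v'" by blast
      thus "map g r \<in> snd R" unfolding R by (simp only: snd_conv mem_Collect_eq)
    qed
  qed
  ultimately show "R \<in> Inv A (End A Q)" by (simp add: Inv_def)
qed

definition conjL :: "'r pform list \<Rightarrow> 'r pform" where
  "conjL fs = foldr PAnd fs (PEq 0 0)"
definition disjL :: "'r pform list \<Rightarrow> 'r pform" where
  "disjL fs = foldr POr fs PFalse"

lemma holds_conjL: "holds A (conjL fs) v \<longleftrightarrow> (\<forall>\<phi>\<in>set fs. holds A \<phi> v)"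
  by (induction fs) (auto simp: conjL_def)
lemma holds_disjL: "holds A (disjL fs) v \<longleftrightarrow> (\<exists>\<phi>\<in>set fs. holds A \<phi> v)"
  by (induction fs) (auto simp: disjL_def)
lemma over_conjL: "pform_over Q (conjL fs) \<longleftrightarrow> (\<forall>\<phi>\<in>set fs. pform_over Q \<phi>)"
  by (induction fs) (auto simp: conjL_def)
lemma over_disjL: "pform_over Q (disjL fs) \<longleftrightarrow> (\<forall>\<phi>\<in>set fs. pform_over Q \<phi>)"
  by (induction fs) (auto simp: disjL_def)

lemma Inv_sub_pos:
  assumes fin: "finite A" and A: "A \<noteq> {}" and as: "set as = A" and Q: "Q \<subseteq> Rel A"
  shows "Inv A (End A Q) \<subseteq> pos_def A Q"
proof
  fix R assume R: "R \<in> Inv A (End A Q)"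
  obtain m \<rho> where R': "R = (m,\<rho>)" by (cases R)
  have relR: "(m,\<rho>) \<in> Rel A" using R R' by (simp add: Inv_def)
  hence m1: "1 \<le> m" and \<rho>sub: "\<rho> \<subseteq> tuples A m" by (auto simp: Rel_def)
  have invR: "\<And>g. g \<in> End A Q \<Longrightarrow> preserves_map g (m,\<rho>)" using R R' by (simp add: Inv_def)
  define k where "k = length as"
  define E where "E = (A \<rightarrow>\<^sub>E A) - End A Q"
  have finE: "finite E" unfolding E_def using fin by (intro finite_Diff finite_PiE) auto
  have "\<forall>g\<in>E. \<exists>p. fst p \<in> Q \<and> snd p \<in> snd (fst p) \<and> map g (snd p) \<notin> snd (fst p)"
    by (auto simp: E_def End_def preserves_map_def)
  then obtain c where c: "\<And>g. g \<in> E \<Longrightarrow> fst (c g) \<in> Q \<and> snd (c g) \<in> snd (fst (c g)) \<and> map g (snd (c g)) \<notin> snd (fst (c g))"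
    using bchoice by metis
  obtain gl where gl: "set gl = E" using finite_list[OF finE] by blast
  have fin\<rho>: "finite \<rho>" using \<rho>sub finite_lists_length_eq[OF fin, of m] by (auto simp: tuples_def intro: finite_subset)
  obtain rl where rl: "set rl = \<rho>" using finite_list[OF fin\<rho>] by blast
  define \<Phi> where "\<Phi> = conjL (map (\<lambda>g. PAtom (fst (c g)) (map (idx as) (snd (c g)))) gl)"
  define \<Psi> :: "(nat \<times> 'a list set) pform" where "\<Psi> = disjL (map (\<lambda>r. conjL (map (\<lambda>i. PEq (k+i) (idx as (r!i))) [0..<m])) rl)"
  define ys where "ys = map (\<lambda>i. k+i) [0..<m]"
  have crel: "\<And>g. g \<in> E \<Longrightarrow> set (snd (c g)) \<subseteq> A \<and> length (snd (c g)) = fst (fst (c g))"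
  proof -
    fix g assume g: "g \<in> E"
    have "(fst (fst (c g)), snd (fst (c g))) \<in> Rel A" using c[OF g] Q by auto
    thus "set (snd (c g)) \<subseteq> A \<and> length (snd (c g)) = fst (fst (c g))" using Rel_mem c[OF g] by blast
  qed
  have over: "pform_over Q (PAnd \<Phi> \<Psi>)"
    using c crel gl by (auto simp: \<Phi>_def \<Psi>_def over_conjL over_disjL)
  have ysne: "ys \<noteq> []" using m1 by (auto simp: ys_def)
  have "\<rho> = {map v ys | v. (\<forall>i. v i \<in> A) \<and> holds A (PAnd \<Phi> \<Psi>) v}"
  proof
    show "\<rho> \<subseteq> {map v ys | v. (\<forall>i. v i \<in> A) \<and> holds A (PAnd \<Phi> \<Psi>) v}"
    proof
      fix r assume r: "r \<in> \<rho>"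
      have rA: "set r \<subseteq> A" "length r = m" using r \<rho>sub by (auto simp: tuples_def)
      obtain a0 where a0: "a0 \<in> A" using A by blast
      define v where "v = (\<lambda>p. if p < k then as!p else if p < k+m then r!(p-k) else a0)"
      have vA: "\<forall>i. v i \<in> A" using a0 rA as by (auto simp: v_def k_def)
      have vidx: "\<And>a. a \<in> A \<Longrightarrow> v (idx as a) = a" using idx[of _ as] as by (auto simp: v_def k_def)
      have "holds A \<Phi> v"
        unfolding \<Phi>_def holds_conjL
      proof
        fix \<phi> :: "(nat \<times> 'a list set) pform" assume "\<phi> \<in> set (map (\<lambda>g. PAtom (fst (c g)) (map (idx as) (snd (c g)))) gl)"
        then obtain g where g: "g \<in> E" "\<phi> = PAtom (fst (c g)) (map (idx as) (snd (c g)))" using gl by auto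
        have "map v (map (idx as) (snd (c g))) = snd (c g)"
          using crel[OF g(1)] vidx by (auto intro!: map_idI)
        thus "holds A \<phi> v" using g c[OF g(1)] by simp
      qed
      moreover have "holds A \<Psi> v"
        unfolding \<Psi>_def holds_disjL
      proof
        show "conjL (map (\<lambda>i. PEq (k+i) (idx as (r!i))) [0..<m]) \<in> set (map (\<lambda>r. conjL (map (\<lambda>i. PEq (k+i) (idx as (r!i))) [0..<m])) rl)"
          using r rl by auto
        show "holds A (conjL (map (\<lambda>i. PEq (k+i) (idx as (r!i))) [0..<m])) v"
          unfolding holds_conjL
        proof
          fix \<phi> :: "(nat \<times> 'a list set) pform" assume "\<phi> \<in> set (map (\<lambda>i. PEq (k+i) (idx as (r!i))) [0..<m])"
          then obtain i where i: "i < m" "\<phi> = PEq (k+i) (idx as (r!i))" by auto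
          have "r ! i \<in> A" using rA i by auto
          hence "v (idx as (r!i)) = r!i" using vidx by blast
          moreover have "v (k+i) = r!i" using i by (simp add: v_def)
          ultimately show "holds A \<phi> v" using i by simp
        qed
      qed
      moreover have "map v ys = r" using rA by (auto intro!: nth_equalityI simp: ys_def v_def)
      ultimately show "r \<in> {map v ys | v. (\<forall>i. v i \<in> A) \<and> holds A (PAnd \<Phi> \<Psi>) v}" using vA by force
    qed
  next
    show "{map v ys | v. (\<forall>i. v i \<in> A) \<and> holds A (PAnd \<Phi> \<Psi>) v} \<subseteq> \<rho>"
    proof
      fix t assume "t \<in> {map v ys | v. (\<forall>i. v i \<in> A) \<and> holds A (PAnd \<Phi> \<Psi>) v}"
      then obtain v where t: "t = map v ys" and vA: "\<forall>i. v i \<in> A" and h\<Phi>: "holds A \<Phi> v" and h\<Psi>: "holds A \<Psi> v"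
        by auto
      define g where "g = restrict (\<lambda>a. v (idx as a)) A"
      have gP: "g \<in> A \<rightarrow>\<^sub>E A" using vA by (auto simp: g_def)
      have gE: "g \<in> End A Q"
      proof (rule ccontr)
        assume "g \<notin> End A Q"
        hence gE: "g \<in> E" using gP by (simp add: E_def)
        hence "holds A (PAtom (fst (c g)) (map (idx as) (snd (c g)))) v"
          using h\<Phi> gl unfolding \<Phi>_def holds_conjL by auto
        hence in1: "map v (map (idx as) (snd (c g))) \<in> snd (fst (c g))" by simp
        have eq1: "map v (map (idx as) (snd (c g))) = map g (snd (c g))"
          using crel[OF gE] by (auto simp: g_def)
        have "map g (snd (c g)) \<notin> snd (fst (c g))" using c[OF gE] by blast
        thus False using in1 eq1 by metis
      qed
      obtain r where r: "r \<in> \<rho>" and hr: "holds A (conjL (map (\<lambda>i. PEq (k+i) (idx as (r!i))) [0..<m])) v"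
        using h\<Psi> rl unfolding \<Psi>_def holds_disjL by auto
      have rA: "set r \<subseteq> A" "length r = m" using r \<rho>sub by (auto simp: tuples_def)
      have "map v ys = map g r"
      proof (rule nth_equalityI)
        show "length (map v ys) = length (map g r)" using rA by (simp add: ys_def)
        fix i assume "i < length (map v ys)"
        hence i: "i < m" by (simp add: ys_def)
        have "v (k+i) = v (idx as (r!i))" using hr i unfolding holds_conjL by auto
        moreover have "r!i \<in> A" using rA i by auto
        ultimately show "map v ys ! i = map g r ! i" using i rA by (simp add: ys_def g_def)
      qed
      moreover have "map g r \<in> \<rho>" using invR[OF gE] r by (simp add: preserves_map_def)
      ultimately show "t \<in> \<rho>" using t by simp
    qed
  qed
  moreover have "length ys = m" by (simp add: ys_def)
  ultimately show "R \<in> pos_def A Q" unfolding pos_def_def R' using ysne over by blast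
qed

lemma pos_eq_Inv:
  assumes "finite A" "A \<noteq> {}" "set as = A" "Q \<subseteq> Rel A"
  shows "pos_def A Q = Inv A (End A Q)"
  using pos_sub_Inv Inv_sub_pos[OF assms] by blast

lemma End_Inv_End:
  assumes Q: "Q \<subseteq> Rel A"
  shows "End A (Inv A (End A Q)) = End A Q"
proof
  have "Q \<subseteq> Inv A (End A Q)" using Q by (auto simp: Inv_def End_def)
  thus "End A (Inv A (End A Q)) \<subseteq> End A Q" by (auto simp: End_def)
  show "End A Q \<subseteq> End A (Inv A (End A Q))" by (auto simp: End_def Inv_def)
qed

lemma pos_iff:
  assumes "finite A" "A \<noteq> {}" "set as = A" "Q \<subseteq> Rel A" "Q' \<subseteq> Rel A"
  shows "pos_def A Q = pos_def A Q' \<longleftrightarrow> End A Q = End A Q'"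
  using pos_eq_Inv[OF assms(1-4)] pos_eq_Inv[OF assms(1-3,5)] End_Inv_End[OF assms(4)] End_Inv_End[OF assms(5)]
  by metis

theorem corollary4p3:
  fixes A :: "'a set" and as :: "'a list"
  assumes "finite A" and "A \<noteq> {}"
    and "distinct as" and "set as = A"
  shows
  "(\<forall>M. M \<subseteq> A \<rightarrow>\<^sub>E A \<longrightarrow> star A (ubar A M) = Pol A (gQuordM A M))
   \<and>
   (\<forall>M. monoid_on A M \<longrightarrow>
      (u_closed A M \<longleftrightarrow> clone A (star A M))
    \<and> (u_closed A M \<longleftrightarrow> Gamma as M \<in> gQuord A)
    \<and> (u_closed A M \<longleftrightarrow> (\<exists>Q \<subseteq> gQuord A. M = End A Q))
    \<and> (u_closed A M \<longleftrightarrow> (\<exists>Q \<subseteq> gQuord A. star A M = Pol A Q))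
    \<and> (u_closed A M \<longleftrightarrow> (\<exists>Q \<subseteq> gQuord A. M = End A Q \<and> star A M = Pol A Q)))
   \<and>
   (\<forall>Q. Q \<subseteq> Rel A \<longrightarrow>
      (u_closed A (End A Q) \<longleftrightarrow> clone A (star A (End A Q)))
    \<and> (u_closed A (End A Q) \<longleftrightarrow> Gamma as (End A Q) \<in> gQuord A)
    \<and> (u_closed A (End A Q) \<longleftrightarrow> (\<exists>Q' \<subseteq> gQuord A. End A Q = End A Q'))
    \<and> (u_closed A (End A Q) \<longleftrightarrow> (\<exists>Q' \<subseteq> gQuord A. pos_def A Q = pos_def A Q'))
    \<and> (u_closed A (End A Q) \<longleftrightarrow> (\<exists>Q' \<subseteq> gQuord A. star A (End A Q) = Pol A Q'))
    \<and> (u_closed A (End A Q) \<longleftrightarrow>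
         (\<exists>Q' \<subseteq> gQuord A. End A Q = End A Q' \<and> star A (End A Q) = Pol A Q'))
    \<and> (u_closed A (End A Q) \<longleftrightarrow> (\<exists>\<rho> \<in> gQuord A. End A Q = End A {\<rho>}))
    \<and> (u_closed A (End A Q) \<longleftrightarrow> (\<exists>\<rho> \<in> gQuord A. pos_def A Q = pos_def A {\<rho>}))
    \<and> (u_closed A (End A Q) \<longleftrightarrow> (\<exists>\<rho> \<in> gQuord A. star A (End A Q) = Pol A {\<rho>}))
    \<and> (u_closed A (End A Q) \<longleftrightarrow>
         (\<exists>\<rho> \<in> gQuord A. End A Q = End A {\<rho>} \<and> star A (End A Q) = Pol A {\<rho>})))"
  proof -
  note A = assms(2) and fin = assms(1) and dist = assms(3) and as = assms(4)
  have P1: "\<forall>M. M \<subseteq> A \<rightarrow>\<^sub>E A \<longrightarrow> star A (ubar A M) = Pol A (gQuordM A M)"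
  proof (intro allI impI)
    fix M assume M: "M \<subseteq> A \<rightarrow>\<^sub>E A"
    have "gQuordM A M \<subseteq> gQuord A" by (auto simp: gQuordM_def)
    thus "star A (ubar A M) = Pol A (gQuordM A M)"
      using ubar_eq[OF A dist as M] star_End_eq_Pol[OF A] by simp
  qed
  have P2: "\<forall>M. monoid_on A M \<longrightarrow>
      (u_closed A M \<longleftrightarrow> clone A (star A M))
    \<and> (u_closed A M \<longleftrightarrow> Gamma as M \<in> gQuord A)
    \<and> (u_closed A M \<longleftrightarrow> (\<exists>Q \<subseteq> gQuord A. M = End A Q))
    \<and> (u_closed A M \<longleftrightarrow> (\<exists>Q \<subseteq> gQuord A. star A M = Pol A Q))
    \<and> (u_closed A M \<longleftrightarrow> (\<exists>Q \<subseteq> gQuord A. M = End A Q \<and> star A M = Pol A Q))"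
    using partb[OF A dist as] by blast
  have P3: "(u_closed A (End A Q) \<longleftrightarrow> clone A (star A (End A Q)))
    \<and> (u_closed A (End A Q) \<longleftrightarrow> Gamma as (End A Q) \<in> gQuord A)
    \<and> (u_closed A (End A Q) \<longleftrightarrow> (\<exists>Q' \<subseteq> gQuord A. End A Q = End A Q'))
    \<and> (u_closed A (End A Q) \<longleftrightarrow> (\<exists>Q' \<subseteq> gQuord A. pos_def A Q = pos_def A Q'))
    \<and> (u_closed A (End A Q) \<longleftrightarrow> (\<exists>Q' \<subseteq> gQuord A. star A (End A Q) = Pol A Q'))
    \<and> (u_closed A (End A Q) \<longleftrightarrow>
         (\<exists>Q' \<subseteq> gQuord A. End A Q = End A Q' \<and> star A (End A Q) = Pol A Q'))
    \<and> (u_closed A (End A Q) \<longleftrightarrow> (\<exists>\<rho> \<in> gQuord A. End A Q = End A {\<rho>}))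
    \<and> (u_closed A (End A Q) \<longleftrightarrow> (\<exists>\<rho> \<in> gQuord A. pos_def A Q = pos_def A {\<rho>}))
    \<and> (u_closed A (End A Q) \<longleftrightarrow> (\<exists>\<rho> \<in> gQuord A. star A (End A Q) = Pol A {\<rho>}))
    \<and> (u_closed A (End A Q) \<longleftrightarrow>
         (\<exists>\<rho> \<in> gQuord A. End A Q = End A {\<rho>} \<and> star A (End A Q) = Pol A {\<rho>}))"
    if Q: "Q \<subseteq> Rel A" for Q
  proof -
    define M where "M = End A Q"
    have mM: "monoid_on A M" using monoid_End[OF Q] by (simp add: M_def)
    note B = partb[OF A dist as mM]
    have G1: "Gamma as M \<in> gQuord A \<and> M = End A {Gamma as M} \<and> star A M = Pol A {Gamma as M}"
      if "u_closed A M"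
      using that B Gamma_End[OF mM as] star_End_eq_Pol[OF A, of "{Gamma as M}"] by auto
    have G2: "u_closed A M" if "Q' \<subseteq> gQuord A" "End A Q = End A Q'" for Q'
      using B that by (auto simp: M_def)
    have G3: "u_closed A M" if "Q' \<subseteq> gQuord A" "star A M = Pol A Q'" for Q'
      using B that by auto
    have pos1: "pos_def A Q = pos_def A {Gamma as M}" if "u_closed A M"
    proof -
      have "{Gamma as M} \<subseteq> Rel A" using G1[OF that] gQuord_Rel by blast
      thus ?thesis using pos_iff[OF fin A as Q] G1[OF that] by (simp add: M_def)
    qed
    have pos2: "u_closed A M" if "Q' \<subseteq> gQuord A" "pos_def A Q = pos_def A Q'" for Q'
      using pos_iff[OF fin A as Q gQuord_Rel[OF that(1)]] that G2 by blast
    have sing: "{\<rho>} \<subseteq> gQuord A \<longleftrightarrow> \<rho> \<in> gQuord A" for \<rho> by simp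
    show ?thesis unfolding M_def[symmetric]
      using B G1 G2 G3 pos1 pos2 sing by metis
  qed
  show ?thesis using P1 P2 P3 by blast
qed

end
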